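(* Let $K_{n,m}$ be a nice complete bipartite graph with $K_{n,m}\ne K_{2,2}$. Then $\chi'_{qm\Sigma}(K_{n,m})=2$ if $n\ne m$, and $\chi'_{qm\Sigma}(K_{n,m})=3$ if $n=m$.
   Context: A $k$-edge-coloring of $G$ is any map $c:E(G)\to\{1,\dots,k\}$ (adjacent edges may share colors). It induces $\sigma_c(v)=\sum_{u\in N(v)}c(vu)$. The coloring is neighbor sum distinguishing (NSD) if $\sigma_c(u)\ne\sigma_c(v)$ for every edge $uv$. It is quasi-majority if every vertex $v$ is incident to at most $\lceil d(v)/2\rceil$ edges of each single color. $\chi'_{qm\Sigma}(G)$ denotes the least $k$ such that $G$ has a $k$-edge-coloring that is both quasi-majority and NSD. A graph is nice if it has no connected component isomorphic to $K_2$. *)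

theory Defs
  imports Main
begin

text \<open>A simple graph is represented by its edge set E, a set of 2-element vertex sets.\<close>

definition incident :: "'a set set \<Rightarrow> 'a \<Rightarrow> 'a set set" where
  "incident E v = {e \<in> E. v \<in> e}"

definition degree :: "'a set set \<Rightarrow> 'a \<Rightarrow> nat" where
  "degree E v = card (incident E v)"

definition sigma :: "'a set set \<Rightarrow> ('a set \<Rightarrow> nat) \<Rightarrow> 'a \<Rightarrow> nat" where
  "sigma E c v = (\<Sum>e\<in>incident E v. c e)"

definition k_edge_coloring :: "'a set set \<Rightarrow> nat \<Rightarrow> ('a set \<Rightarrow> nat) \<Rightarrow> bool" where
  "k_edge_coloring E k c \<longleftrightarrow> (\<forall>e\<in>E. c e \<in> {1..k})"

text \<open>quasi-majority: at most ceil(d(v)/2) = (d(v)+1) div 2 incident edges of each colour.\<close>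
definition quasi_majority :: "'a set set \<Rightarrow> ('a set \<Rightarrow> nat) \<Rightarrow> bool" where
  "quasi_majority E c \<longleftrightarrow>
     (\<forall>v i. card {e \<in> incident E v. c e = i} \<le> (degree E v + 1) div 2)"

definition nsd :: "'a set set \<Rightarrow> ('a set \<Rightarrow> nat) \<Rightarrow> bool" where
  "nsd E c \<longleftrightarrow> (\<forall>u v. {u, v} \<in> E \<and> u \<noteq> v \<longrightarrow> sigma E c u \<noteq> sigma E c v)"

definition chi_qm_sigma :: "'a set set \<Rightarrow> nat" where
  "chi_qm_sigma E = (LEAST k. \<exists>c. k_edge_coloring E k c \<and> quasi_majority E c \<and> nsd E c)"

definition complete_bipartite :: "nat \<Rightarrow> nat \<Rightarrow> (nat + nat) set set" where
  "complete_bipartite n m = {{Inl i, Inr j} | i j. i < n \<and> j < m}"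

end

theory Submission
  imports Defs
begin

lemma sum2: assumes "h \<le> m" shows "(\<Sum>j<m. if j<h then A else B) = h * A + (m-h)*(B::nat)"
proof -
  have u: "{..<m} = {..<h} \<union> {h..<m}" using assms by auto
  have "(\<Sum>j<m. if j<h then A else B) = (\<Sum>j<h. if j<h then A else B) + (\<Sum>j\<in>{h..<m}. if j<h then A else B)"
    unfolding u by (rule sum.union_disjoint) auto
  also have "\<dots> = (\<Sum>j<h. A) + (\<Sum>j\<in>{h..<m}. B)"
    by (intro arg_cong2[where f="(+)"] sum.cong) auto
  finally show ?thesis by simp
qed
lemma sum3: assumes "1 \<le> a" "a \<le> m" shows "(\<Sum>i<m. if i=0 then X else if i<a then Y else Z) = X + (a-1)*Y + (m-a)*(Z::nat)"
proof -
  have u: "{..<m} = {0} \<union> ({1..<a} \<union> {a..<m})" using assms by (auto; linarith)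
  let ?f = "\<lambda>i. if i=0 then X else if i<a then Y else Z"
  have "sum ?f {..<m} = sum ?f {0} + sum ?f ({1..<a} \<union> {a..<m})"
    unfolding u using assms by (intro sum.union_disjoint) auto
  also have "sum ?f ({1..<a} \<union> {a..<m}) = sum ?f {1..<a} + sum ?f {a..<m}"
    by (rule sum.union_disjoint) auto
  also have "sum ?f {1..<a} = sum (\<lambda>i. Y) {1..<a}" by (rule sum.cong) auto
  also have "sum ?f {a..<m} = sum (\<lambda>i. Z) {a..<m}" using assms by (intro sum.cong) auto
  finally show ?thesis by simp
qed
lemma cnt2: assumes "A \<noteq> B" shows "card {j\<in>{..<m}. (if j<h then A else B) = x} \<le> max h (m-h)"
proof -
  consider "x = A" | "x = B" | "x \<noteq> A \<and> x \<noteq> B" by blast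
  then show ?thesis
  proof cases
    case 1
    have "card {j\<in>{..<m}. (if j<h then A else B) = x} \<le> card {..<h}"
      by (rule card_mono) (use 1 assms in auto)
    then show ?thesis by simp
  next
    case 2
    have "card {j\<in>{..<m}. (if j<h then A else B) = x} \<le> card {h..<m}"
      by (rule card_mono) (use 2 assms in auto)
    then show ?thesis by simp
  next
    case 3
    then have "{j\<in>{..<m}. (if j<h then A else B) = x} = {}" by auto
    then show ?thesis by (metis card.empty zero_le)
  qed
qed
lemma cnt3: assumes "X \<noteq> Y" "Y \<noteq> Z" "X \<noteq> Z"
  shows "card {i\<in>{..<m}. (if i=0 then X else if i<a then Y else Z) = x} \<le> max 1 (max (a-1) (m-a))"
proof -
  consider "x = X" | "x = Y" | "x = Z" | "x \<noteq> X \<and> x \<noteq> Y \<and> x \<noteq> Z" by blast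
  then show ?thesis
  proof cases
    case 1
    have "card {i\<in>{..<m}. (if i=0 then X else if i<a then Y else Z) = x} \<le> card {0::nat}"
      by (rule card_mono) (use 1 assms in auto)
    then show ?thesis by simp
  next
    case 2
    have "card {i\<in>{..<m}. (if i=0 then X else if i<a then Y else Z) = x} \<le> card {1..<a}"
      by (rule card_mono) (use 2 assms in \<open>auto split: if_splits\<close>)
    then show ?thesis by simp
  next
    case 3
    have "card {i\<in>{..<m}. (if i=0 then X else if i<a then Y else Z) = x} \<le> card {a..<m}"
      by (rule card_mono) (use 3 assms in \<open>auto split: if_splits\<close>)
    then show ?thesis by simp
  next
    case 4
    then have "{i\<in>{..<m}. (if i=0 then X else if i<a then Y else Z) = x} = {}" by auto
    then show ?thesis by (metis card.empty zero_le)
  qed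
qed
lemma two_bound:
  assumes "finite A" "\<forall>x\<in>A. g x \<in> {1,2::nat}"
    "card {x\<in>A. g x = 1} \<le> (card A + 1) div 2" "card {x\<in>A. g x = 2} \<le> (card A + 1) div 2"
  shows "3*card A \<le> 2*sum g A + 1 \<and> 2*sum g A \<le> 3*card A + 1"
proof -
  let ?A1 = "{x\<in>A. g x = 1}" and ?A2 = "{x\<in>A. g x = 2}"
  have u: "A = ?A1 \<union> ?A2" using assms(2) by auto
  have d: "?A1 \<inter> ?A2 = {}" by auto
  have c: "card A = card ?A1 + card ?A2"
    using card_Un_disjoint[of ?A1 ?A2] assms(1) d u by auto
  have "sum g A = sum g ?A1 + sum g ?A2"
    using sum.union_disjoint[of ?A1 ?A2 g] assms(1) d u by auto
  also have "\<dots> = card ?A1 + 2 * card ?A2" by simp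
  finally have s: "sum g A = card ?A1 + 2 * card ?A2" .
  show ?thesis using s c assms(3,4) by linarith
qed

abbreviation "CB \<equiv> complete_bipartite"

lemma inc_l: "i < n \<Longrightarrow> incident (CB n m) (Inl i) = (\<lambda>j. {Inl i, Inr j}) ` {..<m}"
  unfolding incident_def complete_bipartite_def by auto
lemma inc_r: "j < m \<Longrightarrow> incident (CB n m) (Inr j) = (\<lambda>i. {Inl i, Inr j}) ` {..<n}"
  unfolding incident_def complete_bipartite_def by auto
lemma inc_l0: "\<not> i < n \<Longrightarrow> incident (CB n m) (Inl i) = {}"
  unfolding incident_def complete_bipartite_def by auto
lemma inc_r0: "\<not> j < m \<Longrightarrow> incident (CB n m) (Inr j) = {}"
  unfolding incident_def complete_bipartite_def by auto
lemma inj_l: "inj_on (\<lambda>j. {Inl i, Inr j}) A" by (auto simp: inj_on_def doubleton_eq_iff)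
lemma inj_r: "inj_on (\<lambda>i. {Inl i, Inr j}) A" by (auto simp: inj_on_def doubleton_eq_iff)

lemma sigma_l: "i < n \<Longrightarrow> sigma (CB n m) c (Inl i) = (\<Sum>j<m. c {Inl i, Inr j})"
  by (simp add: sigma_def inc_l sum.reindex[OF inj_l])
lemma sigma_r: "j < m \<Longrightarrow> sigma (CB n m) c (Inr j) = (\<Sum>i<n. c {Inl i, Inr j})"
  by (simp add: sigma_def inc_r sum.reindex[OF inj_r])
lemma deg_l: "i < n \<Longrightarrow> degree (CB n m) (Inl i) = m"
  by (simp add: degree_def inc_l card_image[OF inj_l])
lemma deg_r: "j < m \<Longrightarrow> degree (CB n m) (Inr j) = n"
  by (simp add: degree_def inc_r card_image[OF inj_r])
lemma cnt_l: assumes "i < n"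
  shows "card {e \<in> incident (CB n m) (Inl i). c e = x} = card {j\<in>{..<m}. c {Inl i, Inr j} = x}"
proof -
  have "{e \<in> incident (CB n m) (Inl i). c e = x} = (\<lambda>j. {Inl i, Inr j}) ` {j\<in>{..<m}. c {Inl i, Inr j} = x}"
    using inc_l[OF assms] by auto
  then show ?thesis by (simp add: card_image[OF inj_l])
qed
lemma cnt_r: assumes "j < m"
  shows "card {e \<in> incident (CB n m) (Inr j). c e = x} = card {i\<in>{..<n}. c {Inl i, Inr j} = x}"
proof -
  have "{e \<in> incident (CB n m) (Inr j). c e = x} = (\<lambda>i. {Inl i, Inr j}) ` {i\<in>{..<n}. c {Inl i, Inr j} = x}"
    using inc_r[OF assms] by auto
  then show ?thesis by (simp add: card_image[OF inj_r])
qed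

lemma qm_intro:
  assumes "\<And>i x. i < n \<Longrightarrow> card {j\<in>{..<m}. c {Inl i, Inr j} = x} \<le> (m+1) div 2"
    "\<And>j x. j < m \<Longrightarrow> card {i\<in>{..<n}. c {Inl i, Inr j} = x} \<le> (n+1) div 2"
  shows "quasi_majority (CB n m) c"
  unfolding quasi_majority_def
proof (intro allI)
  fix v x
  show "card {e \<in> incident (CB n m) v. c e = x} \<le> (degree (CB n m) v + 1) div 2"
  proof (cases v)
    case (Inl i)
    show ?thesis
    proof (cases "i < n")
      case True
      have "card {j\<in>{..<m}. c {Inl i, Inr j} = x} \<le> (m+1) div 2" using assms(1) True .
      then show ?thesis by (simp only: Inl cnt_l[OF True] deg_l[OF True])
    qed (simp add: Inl inc_l0)
  next
    case (Inr j)
    show ?thesis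
    proof (cases "j < m")
      case True
      have "card {i\<in>{..<n}. c {Inl i, Inr j} = x} \<le> (n+1) div 2" using assms(2) True .
      then show ?thesis by (simp only: Inr cnt_r[OF True] deg_r[OF True])
    qed (simp add: Inr inc_r0)
  qed
qed
lemma qm_l: "quasi_majority (CB n m) c \<Longrightarrow> i < n \<Longrightarrow> card {j\<in>{..<m}. c {Inl i, Inr j} = x} \<le> (m+1) div 2"
proof -
  assume a: "quasi_majority (CB n m) c" "i < n"
  then have "card {e \<in> incident (CB n m) (Inl i). c e = x} \<le> (degree (CB n m) (Inl i) + 1) div 2"
    unfolding quasi_majority_def by blast
  then show ?thesis by (simp add: cnt_l deg_l a(2))
qed
lemma qm_r: "quasi_majority (CB n m) c \<Longrightarrow> j < m \<Longrightarrow> card {i\<in>{..<n}. c {Inl i, Inr j} = x} \<le> (n+1) div 2"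
proof -
  assume a: "quasi_majority (CB n m) c" "j < m"
  then have "card {e \<in> incident (CB n m) (Inr j). c e = x} \<le> (degree (CB n m) (Inr j) + 1) div 2"
    unfolding quasi_majority_def by blast
  then show ?thesis by (simp add: cnt_r deg_r a(2))
qed

lemma nsd_intro:
  assumes "\<And>i j. i < n \<Longrightarrow> j < m \<Longrightarrow> sigma (CB n m) c (Inl i) \<noteq> sigma (CB n m) c (Inr j)"
  shows "nsd (CB n m) c"
  unfolding nsd_def
proof (intro allI impI)
  fix u v assume h: "{u, v} \<in> CB n m \<and> u \<noteq> v"
  then obtain i j where ij: "i < n" "j < m" "{u,v} = {Inl i, Inr j}"
    unfolding complete_bipartite_def by auto
  then have "(u = Inl i \<and> v = Inr j) \<or> (u = Inr j \<and> v = Inl i)" by (auto simp: doubleton_eq_iff)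
  then show "sigma (CB n m) c u \<noteq> sigma (CB n m) c v" using assms[OF ij(1,2)] by auto
qed
lemma nsd_d: "nsd (CB n m) c \<Longrightarrow> i < n \<Longrightarrow> j < m \<Longrightarrow> sigma (CB n m) c (Inl i) \<noteq> sigma (CB n m) c (Inr j)"
  unfolding nsd_def complete_bipartite_def by blast

lemma kc_d: "k_edge_coloring (CB n m) k c \<Longrightarrow> i < n \<Longrightarrow> j < m \<Longrightarrow> c {Inl i, Inr j} \<in> {1..k}"
  unfolding k_edge_coloring_def complete_bipartite_def by blast
lemma kc_intro: "(\<And>i j. i < n \<Longrightarrow> j < m \<Longrightarrow> c {Inl i, Inr j} \<in> {1..k}) \<Longrightarrow> k_edge_coloring (CB n m) k c"
  unfolding k_edge_coloring_def complete_bipartite_def by blast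

definition colfun :: "(nat \<Rightarrow> nat \<Rightarrow> nat) \<Rightarrow> (nat + nat) set \<Rightarrow> nat" where
  "colfun F e = F (THE i. Inl i \<in> e) (THE j. Inr j \<in> e)"
lemma colfun_eq[simp]: "colfun F {Inl i, Inr j} = F i j"
  by (simp add: colfun_def)


lemma no_small:
  assumes "n \<ge> 1" "m \<ge> 1" "\<not> (n = 1 \<and> m = 1)" "k \<le> 1"
    "k_edge_coloring (CB n m) k c" "quasi_majority (CB n m) c"
  shows False
proof -
  have c1: "c {Inl i, Inr j} = 1" if "i < n" "j < m" for i j
    using kc_d[OF assms(5) that] assms(4) by auto
  show False
  proof (cases "m \<ge> 2")
    case True
    have "{j\<in>{..<m}. c {Inl 0, Inr j} = 1} = {..<m}" using c1 assms(1) by auto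
    then have "m \<le> (m+1) div 2" using qm_l[OF assms(6), of 0 1] assms(1) by simp
    then show False using True by linarith
  next
    case False
    then have "n \<ge> 2" "m = 1" using assms by auto
    have "{i\<in>{..<n}. c {Inl i, Inr 0} = 1} = {..<n}" using c1 assms(2) by auto
    then have "n \<le> (n+1) div 2" using qm_r[OF assms(6), of 0 1] assms(2) by simp
    then show False using \<open>n \<ge> 2\<close> by linarith
  qed
qed

lemma row_bound:
  assumes "k \<le> 2" "k_edge_coloring (CB n m) k c" "quasi_majority (CB n m) c" "i < n"
  shows "3*m \<le> 2*sigma (CB n m) c (Inl i) + 1 \<and> 2*sigma (CB n m) c (Inl i) \<le> 3*m + 1"
proof -
  have "3*card {..<m} \<le> 2*sum (\<lambda>j. c {Inl i, Inr j}) {..<m} + 1 \<and> 2*sum (\<lambda>j. c {Inl i, Inr j}) {..<m} \<le> 3*card {..<m} + 1"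
  proof (rule two_bound)
    show "\<forall>x\<in>{..<m}. c {Inl i, Inr x} \<in> {1, 2}" using kc_d[OF assms(2) assms(4)] assms(1) by fastforce
    show "card {x \<in> {..<m}. c {Inl i, Inr x} = 1} \<le> (card {..<m} + 1) div 2"
      using qm_l[OF assms(3,4)] by simp
    show "card {x \<in> {..<m}. c {Inl i, Inr x} = 2} \<le> (card {..<m} + 1) div 2"
      using qm_l[OF assms(3,4)] by simp
  qed simp
  then show ?thesis by (simp add: sigma_l[OF assms(4)])
qed

lemma col_bound:
  assumes "k \<le> 2" "k_edge_coloring (CB n m) k c" "quasi_majority (CB n m) c" "j < m"
  shows "3*n \<le> 2*sigma (CB n m) c (Inr j) + 1 \<and> 2*sigma (CB n m) c (Inr j) \<le> 3*n + 1"
proof -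
  have "3*card {..<n} \<le> 2*sum (\<lambda>i. c {Inl i, Inr j}) {..<n} + 1 \<and> 2*sum (\<lambda>i. c {Inl i, Inr j}) {..<n} \<le> 3*card {..<n} + 1"
  proof (rule two_bound)
    show "\<forall>x\<in>{..<n}. c {Inl x, Inr j} \<in> {1, 2}" using kc_d[OF assms(2) _ assms(4)] assms(1) by fastforce
    show "card {x \<in> {..<n}. c {Inl x, Inr j} = 1} \<le> (card {..<n} + 1) div 2"
      using qm_r[OF assms(3,4)] by simp
    show "card {x \<in> {..<n}. c {Inl x, Inr j} = 2} \<le> (card {..<n} + 1) div 2"
      using qm_r[OF assms(3,4)] by simp
  qed simp
  then show ?thesis by (simp add: sigma_r[OF assms(4)])
qed

lemma arith3: "3*m \<le> 2*(x::nat)+1 \<and> 2*x \<le> 3*m+1 \<Longrightarrow> 3*m \<le> 2*y+1 \<and> 2*y \<le> 3*m+1 \<Longrightarrow> 3*m \<le> 2*z+1 \<and> 2*z \<le> 3*m+1 \<Longrightarrow> x \<noteq> z \<Longrightarrow> y \<noteq> z \<Longrightarrow> x = y"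
  by presburger

lemma no_eq:
  assumes "m \<ge> 1" "k \<le> 2" "k_edge_coloring (CB m m) k c" "quasi_majority (CB m m) c" "nsd (CB m m) c"
  shows False
proof -
  define R where "R i = sigma (CB m m) c (Inl i)" for i
  define C where "C j = sigma (CB m m) c (Inr j)" for j
  have m0: "0 < m" using assms(1) by simp
  have rb: "3*m \<le> 2*R i + 1 \<and> 2*R i \<le> 3*m + 1" if "i < m" for i
    unfolding R_def using row_bound[OF assms(2,3,4) that] .
  have cb: "3*m \<le> 2*C j + 1 \<and> 2*C j \<le> 3*m + 1" if "j < m" for j
    unfolding C_def using col_bound[OF assms(2,3,4) that] .
  have ne: "R i \<noteq> C j" if "i < m" "j < m" for i j
    unfolding R_def C_def using nsd_d[OF assms(5) that] .
  have Ri: "R i = R 0" if "i < m" for i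
  proof -
    have "R i \<noteq> C 0" "R 0 \<noteq> C 0" using ne that m0 by auto
    then show ?thesis using arith3[OF rb[OF that] rb[OF m0] cb[OF m0]] by blast
  qed
  have Cj: "C j = C 0" if "j < m" for j
  proof -
    have "R 0 \<noteq> C j" "R 0 \<noteq> C 0" using ne that m0 by auto
    then show ?thesis using arith3[OF cb[OF that] cb[OF m0] rb[OF m0]] by metis
  qed
  have "(\<Sum>i<m. R i) = (\<Sum>i<m. \<Sum>j<m. c {Inl i, Inr j})"
    unfolding R_def by (intro sum.cong refl sigma_l) simp
  also have "\<dots> = (\<Sum>j<m. \<Sum>i<m. c {Inl i, Inr j})" by (rule sum.swap)
  also have "\<dots> = (\<Sum>j<m. C j)"
    unfolding C_def by (intro sum.cong refl sigma_r[symmetric]) simp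
  finally have e: "(\<Sum>i<m. R i) = (\<Sum>j<m. C j)" .
  have "(\<Sum>i<m. R i) = (\<Sum>i<m. R 0)" by (intro sum.cong refl Ri) simp
  also have "\<dots> = m * R 0" by simp
  finally have e1: "(\<Sum>i<m. R i) = m * R 0" .
  have "(\<Sum>j<m. C j) = (\<Sum>j<m. C 0)" by (intro sum.cong refl Cj) simp
  also have "\<dots> = m * C 0" by simp
  finally have e2: "(\<Sum>j<m. C j) = m * C 0" .
  have "m * R 0 = m * C 0" using e e1 e2 by simp
  then have "R 0 = C 0" using m0 by simp
  then show False using ne m0 by auto
qed

lemma arith2: "3*m \<le> 2*(x::nat)+1 \<and> 2*x \<le> 3*m+1 \<Longrightarrow> 3*n \<le> 2*y+1 \<and> 2*y \<le> 3*n+1 \<Longrightarrow> n \<noteq> m \<Longrightarrow> x \<noteq> y" by presburger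

definition F2 :: "nat \<Rightarrow> nat \<Rightarrow> nat \<Rightarrow> nat \<Rightarrow> nat" where
  "F2 n m i j = (if (i < n div 2) = (j < m div 2) then 1 else 2)"

lemma ex2:
  assumes "n \<noteq> m"
  shows "k_edge_coloring (CB n m) 2 (colfun (F2 n m)) \<and> quasi_majority (CB n m) (colfun (F2 n m)) \<and> nsd (CB n m) (colfun (F2 n m))"
proof (intro conjI)
  show kc: "k_edge_coloring (CB n m) 2 (colfun (F2 n m))"
    by (rule kc_intro) (simp add: F2_def)
  show qm: "quasi_majority (CB n m) (colfun (F2 n m))"
  proof (rule qm_intro)
    fix i x assume "i < n"
    have "card {j\<in>{..<m}. colfun (F2 n m) {Inl i, Inr j} = x} \<le> max (m div 2) (m - m div 2)"
    proof (cases "i < n div 2")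
      case True
      then have "{j\<in>{..<m}. colfun (F2 n m) {Inl i, Inr j} = x} = {j\<in>{..<m}. (if j < m div 2 then 1 else 2) = x}"
        by (auto simp: F2_def)
      then show ?thesis using cnt2[of 1 2 m "m div 2" x] by simp
    next
      case False
      then have "{j\<in>{..<m}. colfun (F2 n m) {Inl i, Inr j} = x} = {j\<in>{..<m}. (if j < m div 2 then 2 else 1) = x}"
        by (auto simp: F2_def)
      then show ?thesis using cnt2[of 2 1 m "m div 2" x] by simp
    qed
    then show "card {j\<in>{..<m}. colfun (F2 n m) {Inl i, Inr j} = x} \<le> (m+1) div 2" by linarith
  next
    fix j x assume "j < m"
    have "card {i\<in>{..<n}. colfun (F2 n m) {Inl i, Inr j} = x} \<le> max (n div 2) (n - n div 2)"
    proof (cases "j < m div 2")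
      case True
      then have "{i\<in>{..<n}. colfun (F2 n m) {Inl i, Inr j} = x} = {i\<in>{..<n}. (if i < n div 2 then 1 else 2) = x}"
        by (auto simp: F2_def)
      then show ?thesis using cnt2[of 1 2 n "n div 2" x] by simp
    next
      case False
      then have "{i\<in>{..<n}. colfun (F2 n m) {Inl i, Inr j} = x} = {i\<in>{..<n}. (if i < n div 2 then 2 else 1) = x}"
        by (auto simp: F2_def)
      then show ?thesis using cnt2[of 2 1 n "n div 2" x] by simp
    qed
    then show "card {i\<in>{..<n}. colfun (F2 n m) {Inl i, Inr j} = x} \<le> (n+1) div 2" by linarith
  qed
  show "nsd (CB n m) (colfun (F2 n m))"
  proof (rule nsd_intro)
    fix i j assume ij: "i < n" "j < m"
    have r: "3*m \<le> 2*sigma (CB n m) (colfun (F2 n m)) (Inl i) + 1 \<and> 2*sigma (CB n m) (colfun (F2 n m)) (Inl i) \<le> 3*m + 1"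
      using row_bound[OF _ kc qm ij(1)] by simp
    have c: "3*n \<le> 2*sigma (CB n m) (colfun (F2 n m)) (Inr j) + 1 \<and> 2*sigma (CB n m) (colfun (F2 n m)) (Inr j) \<le> 3*n + 1"
      using col_bound[OF _ kc qm ij(2)] by simp
    show "sigma (CB n m) (colfun (F2 n m)) (Inl i) \<noteq> sigma (CB n m) (colfun (F2 n m)) (Inr j)"
      using r c assms arith2 by blast
  qed
qed

definition F3 :: "nat \<Rightarrow> nat \<Rightarrow> nat \<Rightarrow> nat" where
  "F3 m i j = (if i = 0 then (if j < m div 2 then 1 else 2)
     else if i < m - m div 2 then (if j < m div 2 then 2 else 3)
     else (if j < m div 2 then 3 else 1))"

lemma F3_row:
  "F3 m i = (if i = 0 then (\<lambda>j. if j < m div 2 then 1 else 2)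
     else if i < m - m div 2 then (\<lambda>j. if j < m div 2 then 2 else 3)
     else (\<lambda>j. if j < m div 2 then 3 else 1))"
  by (auto simp: F3_def)
lemma F3_col:
  "(\<lambda>i. F3 m i j) = (if j < m div 2 then (\<lambda>i. if i = 0 then 1 else if i < m - m div 2 then 2 else 3)
     else (\<lambda>i. if i = 0 then 2 else if i < m - m div 2 then 3 else 1))"
  by (auto simp: F3_def)

lemma ex3:
  assumes "m \<ge> 3"
  shows "k_edge_coloring (CB m m) 3 (colfun (F3 m)) \<and> quasi_majority (CB m m) (colfun (F3 m)) \<and> nsd (CB m m) (colfun (F3 m))"
proof (intro conjI)
  let ?h = "m div 2" and ?a = "m - m div 2"
  show kc: "k_edge_coloring (CB m m) 3 (colfun (F3 m))"
    by (rule kc_intro) (simp add: F3_def)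
  show qm: "quasi_majority (CB m m) (colfun (F3 m))"
  proof (rule qm_intro)
    fix i x assume "i < m"
    have "card {j\<in>{..<m}. colfun (F3 m) {Inl i, Inr j} = x} \<le> max ?h (m - ?h)"
    proof -
      consider "i = 0" | "i \<noteq> 0" "i < ?a" | "i \<noteq> 0" "\<not> i < ?a" by blast
      then show ?thesis
      proof cases
        case 1
        then have "{j\<in>{..<m}. colfun (F3 m) {Inl i, Inr j} = x} = {j\<in>{..<m}. (if j < ?h then 1 else 2) = x}"
          by (auto simp: F3_def)
        then show ?thesis using cnt2[of 1 2 m ?h x] by simp
      next
        case 2
        then have "{j\<in>{..<m}. colfun (F3 m) {Inl i, Inr j} = x} = {j\<in>{..<m}. (if j < ?h then 2 else 3) = x}"
          by (auto simp: F3_def)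
        then show ?thesis using cnt2[of 2 3 m ?h x] by simp
      next
        case 3
        then have "{j\<in>{..<m}. colfun (F3 m) {Inl i, Inr j} = x} = {j\<in>{..<m}. (if j < ?h then 3 else 1) = x}"
          by (auto simp: F3_def)
        then show ?thesis using cnt2[of 3 1 m ?h x] by simp
      qed
    qed
    then show "card {j\<in>{..<m}. colfun (F3 m) {Inl i, Inr j} = x} \<le> (m+1) div 2" by linarith
  next
    fix j x assume "j < m"
    have "card {i\<in>{..<m}. colfun (F3 m) {Inl i, Inr j} = x} \<le> max 1 (max (?a - 1) (m - ?a))"
    proof (cases "j < ?h")
      case True
      then have "{i\<in>{..<m}. colfun (F3 m) {Inl i, Inr j} = x} = {i\<in>{..<m}. (if i = 0 then 1 else if i < ?a then 2 else 3) = x}"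
        by (auto simp: F3_def)
      then show ?thesis using cnt3[of 1 2 3 m ?a x] by simp
    next
      case False
      then have "{i\<in>{..<m}. colfun (F3 m) {Inl i, Inr j} = x} = {i\<in>{..<m}. (if i = 0 then 2 else if i < ?a then 3 else 1) = x}"
        by (auto simp: F3_def)
      then show ?thesis using cnt3[of 2 3 1 m ?a x] by simp
    qed
    then show "card {i\<in>{..<m}. colfun (F3 m) {Inl i, Inr j} = x} \<le> (m+1) div 2" using assms by linarith
  qed
  show "nsd (CB m m) (colfun (F3 m))"
  proof (rule nsd_intro)
    fix i j assume ij: "i < m" "j < m"
    have hm: "?h \<le> m" by simp
    have a1: "1 \<le> ?a" "?a \<le> m" using assms by auto
    have rs: "sigma (CB m m) (colfun (F3 m)) (Inl i) \<in> {?h + (m-?h)*2, ?h*2 + (m-?h)*3, ?h*3 + (m-?h)}"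
    proof -
      have s: "sigma (CB m m) (colfun (F3 m)) (Inl i) = (\<Sum>j<m. F3 m i j)"
        using sigma_l[OF ij(1)] by simp
      consider "i = 0" | "i \<noteq> 0" "i < ?a" | "i \<noteq> 0" "\<not> i < ?a" by blast
      then show ?thesis
      proof cases
        case 1
        then have "(\<Sum>j<m. F3 m i j) = (\<Sum>j<m. if j < ?h then 1 else 2)" by (simp add: F3_def)
        then show ?thesis using s sum2[OF hm, of 1 2] by simp
      next
        case 2
        then have "(\<Sum>j<m. F3 m i j) = (\<Sum>j<m. if j < ?h then 2 else 3)" by (simp add: F3_def)
        then show ?thesis using s sum2[OF hm, of 2 3] by simp
      next
        case 3
        then have "(\<Sum>j<m. F3 m i j) = (\<Sum>j<m. if j < ?h then 3 else 1)" by (simp add: F3_def)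
        then show ?thesis using s sum2[OF hm, of 3 1] by simp
      qed
    qed
    have cs: "sigma (CB m m) (colfun (F3 m)) (Inr j) \<in> {1 + (?a-1)*2 + (m-?a)*3, 2 + (?a-1)*3 + (m-?a)}"
    proof -
      have s: "sigma (CB m m) (colfun (F3 m)) (Inr j) = (\<Sum>i<m. F3 m i j)"
        using sigma_r[OF ij(2)] by simp
      show ?thesis
      proof (cases "j < ?h")
        case True
        then have "(\<Sum>i<m. F3 m i j) = (\<Sum>i<m. if i = 0 then 1 else if i < ?a then 2 else 3)" by (simp add: F3_def)
        then show ?thesis using s sum3[OF a1, of 1 2 3] by simp
      next
        case False
        then have "(\<Sum>i<m. F3 m i j) = (\<Sum>i<m. if i = 0 then 2 else if i < ?a then 3 else 1)" by (simp add: F3_def)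
        then show ?thesis using s sum3[OF a1, of 2 3 1] by simp
      qed
    qed
    show "sigma (CB m m) (colfun (F3 m)) (Inl i) \<noteq> sigma (CB m m) (colfun (F3 m)) (Inr j)"
    proof
      assume e: "sigma (CB m m) (colfun (F3 m)) (Inl i) = sigma (CB m m) (colfun (F3 m)) (Inr j)"
      define h where "h = m div 2"
      have hh: "m = 2*h \<or> m = 2*h+1" unfolding h_def by presburger
      have "m - m div 2 = m - h" unfolding h_def ..
      then show False using rs cs e hh assms unfolding h_def[symmetric] by auto
    qed
  qed
qed

theorem mainTheorem5:
  fixes n m :: nat
  assumes "n \<ge> 1" and "m \<ge> 1"
    and nice: "\<not> (n = 1 \<and> m = 1)"
    and "\<not> (n = 2 \<and> m = 2)"
  shows "chi_qm_sigma (complete_bipartite n m) = (if n \<noteq> m then 2 else 3)"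
proof (cases "n = m")
  case False
  have "chi_qm_sigma (complete_bipartite n m) = 2" unfolding chi_qm_sigma_def
  proof (rule Least_equality)
    show "\<exists>c. k_edge_coloring (CB n m) 2 c \<and> quasi_majority (CB n m) c \<and> nsd (CB n m) c"
      using ex2[OF False] by blast
  next
    fix y assume "\<exists>c. k_edge_coloring (CB n m) y c \<and> quasi_majority (CB n m) c \<and> nsd (CB n m) c"
    then obtain c where c: "k_edge_coloring (CB n m) y c" "quasi_majority (CB n m) c" by blast
    show "2 \<le> y"
    proof (rule ccontr)
      assume "\<not> 2 \<le> y"
      then have "y \<le> 1" by simp
      then show False using no_small[OF assms(1,2) nice _ c] by blast
    qed
  qed
  then show ?thesis using False by simp
next
  case True
  then have m3: "m \<ge> 3" using assms by auto
  have "chi_qm_sigma (complete_bipartite m m) = 3" unfolding chi_qm_sigma_def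
  proof (rule Least_equality)
    show "\<exists>c. k_edge_coloring (CB m m) 3 c \<and> quasi_majority (CB m m) c \<and> nsd (CB m m) c"
      using ex3[OF m3] by blast
  next
    fix y assume "\<exists>c. k_edge_coloring (CB m m) y c \<and> quasi_majority (CB m m) c \<and> nsd (CB m m) c"
    then obtain c where c: "k_edge_coloring (CB m m) y c" "quasi_majority (CB m m) c" "nsd (CB m m) c" by blast
    show "3 \<le> y"
    proof (rule ccontr)
      assume "\<not> 3 \<le> y"
      then have "y \<le> 2" by simp
      then show False using no_eq[OF assms(2) _ c] by blast
    qed
  qed
  then show ?thesis using True by simp
qed

end
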